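(* Let $(X,d_X)$ be a compact metric space, let $(\phi_j)_{j\in\mathbb{N}}$ be maps $\phi_j:X\to X$ for which there is $0<\gamma<1$ with $d_X(\phi_j(x_1),\phi_j(x_2))\le \gamma\, d_X(x_1,x_2)$ for all $j\in\mathbb{N}$ and $x_1,x_2\in X$, and let $(q_j)_{j\in\mathbb{N}}$ be real numbers with $q_j\le 0$ for all $j$ and $\sup_{j\in\mathbb{N}} q_j=0$. For $\mu\in I(X)$ and $f\in C(X,\mathbb{R})$ put $$\Lambda_\mu(f):=\lim_{n\to\infty}\ \max_{1\le j\le n} I_j(\mu)(f),\qquad I_j(\mu)(f):=q_j+\mu(f\circ\phi_j).$$ Then this limit exists for every $f\in C(X,\mathbb{R})$, $\Lambda_\mu(f)=\sup_{j\in\mathbb{N}} I_j(\mu)(f)$, and the functional $\Lambda_\mu$ belongs to $I(X)$.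
   Context: Max-plus notation: $a\oplus b=\max(a,b)$, $a\odot b=a+b$ on $\mathbb{R}\cup\{-\infty\}$. $C(X,\mathbb{R})$ is the set of continuous real functions on $X$, with $(a\odot f)(x)=a+f(x)$ and $(f\oplus g)(x)=\max(f(x),g(x))$. A functional $m:C(X,\mathbb{R})\to\mathbb{R}$ is max-plus linear if $m(a+f)=a+m(f)$ for all $a\in\mathbb{R}$, $f\in C(X,\mathbb{R})$, and $m(\max(f,g))=\max(m(f),m(g))$ for all $f,g$. $I(X)$ (idempotent probabilities) is the set of max-plus linear functionals $m$ with $m(0)=0$. *)

theory Defs
  imports "HOL-Analysis.Analysis"
begin

text \<open>The compact metric space X is modelled as the whole type 'a (UNIV).
  C(X,R) is the set of functions f :: 'a => real with continuous_on UNIV f.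
  Functionals on C(X,R) are HOL functions (('a => real) => real); only their
  values on continuous functions matter.\<close>

definition maxplus_linear :: "(('a::topological_space \<Rightarrow> real) \<Rightarrow> real) \<Rightarrow> bool" where
  "maxplus_linear m \<longleftrightarrow>
     (\<forall>a f. continuous_on UNIV f \<longrightarrow> m (\<lambda>x. a + f x) = a + m f) \<and>
     (\<forall>f g. continuous_on UNIV f \<longrightarrow> continuous_on UNIV g \<longrightarrow>
            m (\<lambda>x. max (f x) (g x)) = max (m f) (m g))"

definition idem_prob :: "(('a::topological_space \<Rightarrow> real) \<Rightarrow> real) \<Rightarrow> bool" where
  "idem_prob m \<longleftrightarrow> maxplus_linear m \<and> m (\<lambda>x. 0) = 0"

definition Ij :: "(nat \<Rightarrow> real) \<Rightarrow> (nat \<Rightarrow> 'a \<Rightarrow> 'a) \<Rightarrow> (('a \<Rightarrow> real) \<Rightarrow> real)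
                   \<Rightarrow> nat \<Rightarrow> ('a \<Rightarrow> real) \<Rightarrow> real" where
  "Ij q \<phi> \<mu> j f = q j + \<mu> (f \<circ> \<phi> j)"

definition Lambda :: "(nat \<Rightarrow> real) \<Rightarrow> (nat \<Rightarrow> 'a \<Rightarrow> 'a) \<Rightarrow> (('a \<Rightarrow> real) \<Rightarrow> real)
                   \<Rightarrow> ('a \<Rightarrow> real) \<Rightarrow> real" where
  "Lambda q \<phi> \<mu> f = lim (\<lambda>n. Max ((\<lambda>j. Ij q \<phi> \<mu> j f) ` {1..n}))"

end

theory Submission
  imports Defs
begin

lemma Max_max: assumes "finite A" "A \<noteq> {}" shows "Max ((\<lambda>j. max (a j) (b j::real)) ` A) = max (Max (a`A)) (Max (b`A))"
proof (rule antisym)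
  show "Max ((\<lambda>j. max (a j) (b j::real)) ` A) \<le> max (Max (a`A)) (Max (b`A))"
    using assms by (auto simp: Max_le_iff) (meson Max_ge finite_imageI image_eqI max.coboundedI1 max.coboundedI2 max.mono)+
  have "a x \<le> Max ((\<lambda>j. max (a j) (b j::real)) ` A)" "b x \<le> Max ((\<lambda>j. max (a j) (b j::real)) ` A)" if "x \<in> A" for x
    using assms that by (meson Max_ge finite_imageI image_eqI max.cobounded1 max.cobounded2 order_trans)+
  then show "max (Max (a`A)) (Max (b`A)) \<le> Max ((\<lambda>j. max (a j) (b j::real)) ` A)"
    using assms by (auto simp: Max_le_iff)
qed

lemma Max_plus: assumes "finite A" "A \<noteq> {}" shows "Max ((\<lambda>j. c + (b j::real)) ` A) = c + Max (b`A)"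
proof (rule antisym)
  show "Max ((\<lambda>j. c + (b j::real)) ` A) \<le> c + Max (b`A)"
    using assms by (auto simp: Max_le_iff)
  have "b x \<le> Max ((\<lambda>j. c + (b j::real)) ` A) - c" if "x \<in> A" for x
    using Max_ge[OF finite_imageI[OF assms(1)] imageI[OF that, of "\<lambda>j. c + b j"]] by simp
  then have "Max (b`A) \<le> Max ((\<lambda>j. c + (b j::real)) ` A) - c"
    using assms by (subst Max_le_iff) auto
  then show "c + Max (b`A) \<le> Max ((\<lambda>j. c + (b j::real)) ` A)" by simp
qed

theorem lemma2p7:
  fixes \<phi> :: "nat \<Rightarrow> 'a::metric_space \<Rightarrow> 'a" and q :: "nat \<Rightarrow> real" and \<gamma> :: real
    and \<mu> :: "('a \<Rightarrow> real) \<Rightarrow> real"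
  assumes "compact (UNIV :: 'a set)"
    and "0 < \<gamma>" and "\<gamma> < 1"
    and "\<forall>j\<ge>1. \<forall>x1 x2. dist (\<phi> j x1) (\<phi> j x2) \<le> \<gamma> * dist x1 x2"
    and "\<forall>j\<ge>1. q j \<le> 0"
    and "(SUP j\<in>{1..}. q j) = 0"
    and "idem_prob \<mu>"
  shows "(\<forall>f. continuous_on UNIV f \<longrightarrow>
            ((\<lambda>n. Max ((\<lambda>j. Ij q \<phi> \<mu> j f) ` {1..n}))
               \<longlonglongrightarrow> (SUP j\<in>{1..}. Ij q \<phi> \<mu> j f)))
         \<and> (\<forall>f. continuous_on UNIV f \<longrightarrow> Lambda q \<phi> \<mu> f = (SUP j\<in>{1..}. Ij q \<phi> \<mu> j f))
         \<and> idem_prob (Lambda q \<phi> \<mu>)"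
proof -
  note ml = assms(7)[unfolded idem_prob_def maxplus_linear_def]
  have mu_add: "\<mu> (\<lambda>x. a + f x) = a + \<mu> f" if "continuous_on UNIV f" for a f
    using conjunct1[OF conjunct1[OF ml]] that by blast
  have mu0: "\<mu> (\<lambda>x. 0) = 0" using conjunct2[OF ml] .
  have mu_max: "\<mu> (\<lambda>x. max (f x) (g x)) = max (\<mu> f) (\<mu> g)"
    if "continuous_on UNIV f" "continuous_on UNIV g" for f g
    using conjunct2[OF conjunct1[OF ml]] that by blast
  have mu_const: "\<mu> (\<lambda>x. c) = c" for c
    using mu_add[of "\<lambda>x. 0" c] mu0 by simp
  have mu_le: "\<mu> f \<le> c" if "continuous_on UNIV f" "\<forall>x. f x \<le> c" for f c
  proof -
    have "(\<lambda>x. max (f x) c) = (\<lambda>x. c)" using that(2) by (simp add: max_def)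
    then have "c = max (\<mu> f) c" using mu_max[OF that(1), of "\<lambda>x. c"] mu_const by simp
    then show ?thesis by (simp add: max_def split: if_splits)
  qed
  have phicont: "continuous_on UNIV (\<phi> j)" if "j \<ge> 1" for j
  proof -
    have "\<gamma>-lipschitz_on UNIV (\<phi> j)"
      using assms(2,4) that by (intro lipschitz_onI) auto
    then show ?thesis by (rule lipschitz_on_continuous_on)
  qed
  have compcont: "continuous_on UNIV (f \<circ> \<phi> j)" if "j \<ge> 1" "continuous_on UNIV f" for f j
    using continuous_on_compose[OF phicont[OF that(1)]] that(2)
    by (metis continuous_on_subset subset_UNIV)
  have conv: "(\<lambda>n. Max ((\<lambda>j. Ij q \<phi> \<mu> j f) ` {1..n})) \<longlonglongrightarrow> (SUP j\<in>{1..}. Ij q \<phi> \<mu> j f)"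
    if fc: "continuous_on UNIV f" for f
  proof -
    obtain B where B: "\<forall>x. f x \<le> B"
    proof -
      have "bounded (f ` UNIV)"
        using compact_imp_bounded[OF compact_continuous_image[OF fc assms(1)]] .
      then obtain B where B0: "\<forall>x\<in>f ` UNIV. \<bar>x\<bar> \<le> B" unfolding bounded_real by blast
      have "\<forall>x. f x \<le> B"
      proof
        fix x have "\<bar>f x\<bar> \<le> B" using B0 by blast
        then show "f x \<le> B" by linarith
      qed
      then show ?thesis using that by blast
    qed
    have Ijle: "Ij q \<phi> \<mu> j f \<le> B" if "j \<ge> 1" for j
    proof -
      have "\<mu> (f \<circ> \<phi> j) \<le> B" using mu_le[OF compcont[OF that fc]] B by simp
      then show ?thesis using assms(5) that unfolding Ij_def by force
    qed
    define S where "S = (SUP j\<in>{1..}. Ij q \<phi> \<mu> j f)"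
    have bdd: "bdd_above ((\<lambda>j. Ij q \<phi> \<mu> j f) ` {1..})"
      using Ijle by (auto intro!: bdd_aboveI2)
    have upper: "Ij q \<phi> \<mu> j f \<le> S" if "j \<ge> 1" for j
      unfolding S_def using bdd that by (intro cSUP_upper) auto
    show ?thesis
      unfolding S_def[symmetric]
    proof (rule LIMSEQ_I)
      fix r :: real assume "0 < r"
      then have "S - r < (SUP j\<in>{1..}. Ij q \<phi> \<mu> j f)" unfolding S_def by simp
      moreover have "{1::nat..} \<noteq> {}" by auto
      ultimately obtain j where j: "j \<in> {1..}" "S - r < Ij q \<phi> \<mu> j f"
        using less_cSUP_iff[OF _ bdd, of "S - r"] by blast
      show "\<exists>no. \<forall>n\<ge>no. norm (Max ((\<lambda>j. Ij q \<phi> \<mu> j f) ` {1..n}) - S) < r"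
      proof (rule exI[of _ j], intro allI impI)
        fix n assume n: "j \<le> n"
        have ne: "{1..n} \<noteq> {}" using j n by auto
        have "Ij q \<phi> \<mu> j f \<le> Max ((\<lambda>j. Ij q \<phi> \<mu> j f) ` {1..n})"
          using j n by (intro Max_ge) auto
        moreover have "Max ((\<lambda>j. Ij q \<phi> \<mu> j f) ` {1..n}) \<le> S"
          using ne upper by (auto simp: Max_le_iff)
        ultimately show "norm (Max ((\<lambda>j. Ij q \<phi> \<mu> j f) ` {1..n}) - S) < r"
          using j by auto
      qed
    qed
  qed
  have lam: "Lambda q \<phi> \<mu> f = (SUP j\<in>{1..}. Ij q \<phi> \<mu> j f)" if "continuous_on UNIV f" for f
    unfolding Lambda_def using conv[OF that] by (rule limI)
  have lamT: "(\<lambda>n. Max ((\<lambda>j. Ij q \<phi> \<mu> j f) ` {1..n})) \<longlonglongrightarrow> Lambda q \<phi> \<mu> f"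
    if "continuous_on UNIV f" for f
    using conv[OF that] lam[OF that] by simp
  have ev: "eventually (\<lambda>n. {1..n::nat} \<noteq> {}) sequentially"
    by (rule eventually_sequentiallyI[of 1]) auto
  have L1: "Lambda q \<phi> \<mu> (\<lambda>x. a + f x) = a + Lambda q \<phi> \<mu> f" if fc: "continuous_on UNIV f" for a f
  proof -
    have fc': "continuous_on UNIV (\<lambda>x. a + f x)" using fc by (intro continuous_intros)
    have eq: "Ij q \<phi> \<mu> j (\<lambda>x. a + f x) = a + Ij q \<phi> \<mu> j f" if "j \<ge> 1" for j
      using mu_add[OF compcont[OF that fc], of a] unfolding Ij_def by (simp add: comp_def)
    have E: "eventually (\<lambda>n. a + Max ((\<lambda>j. Ij q \<phi> \<mu> j f) ` {1..n}) = Max ((\<lambda>j. Ij q \<phi> \<mu> j (\<lambda>x. a + f x)) ` {1..n})) sequentially"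
      using ev
    proof eventually_elim
      case (elim n)
      have "(\<lambda>j. Ij q \<phi> \<mu> j (\<lambda>x. a + f x)) ` {1..n} = (\<lambda>j. a + Ij q \<phi> \<mu> j f) ` {1..n}"
        using eq by auto
      then show ?case using Max_plus[OF _ elim] by simp
    qed
    have T: "(\<lambda>n. a + Max ((\<lambda>j. Ij q \<phi> \<mu> j f) ` {1..n})) \<longlonglongrightarrow> a + Lambda q \<phi> \<mu> f"
      using lamT[OF fc] by (intro tendsto_intros)
    have "(\<lambda>n. Max ((\<lambda>j. Ij q \<phi> \<mu> j (\<lambda>x. a + f x)) ` {1..n})) \<longlonglongrightarrow> a + Lambda q \<phi> \<mu> f"
      by (rule Lim_transform_eventually[OF T E])
    then show ?thesis using lamT[OF fc'] LIMSEQ_unique by blast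
  qed
  have L2: "Lambda q \<phi> \<mu> (\<lambda>x. max (f x) (g x)) = max (Lambda q \<phi> \<mu> f) (Lambda q \<phi> \<mu> g)"
    if fc: "continuous_on UNIV f" and gc: "continuous_on UNIV g" for f g
  proof -
    have fgc: "continuous_on UNIV (\<lambda>x. max (f x) (g x))" using fc gc by (intro continuous_intros)
    have eq: "Ij q \<phi> \<mu> j (\<lambda>x. max (f x) (g x)) = max (Ij q \<phi> \<mu> j f) (Ij q \<phi> \<mu> j g)" if "j \<ge> 1" for j
      using mu_max[OF compcont[OF that fc] compcont[OF that gc]] unfolding Ij_def by (simp add: comp_def)
    have E: "eventually (\<lambda>n. max (Max ((\<lambda>j. Ij q \<phi> \<mu> j f) ` {1..n})) (Max ((\<lambda>j. Ij q \<phi> \<mu> j g) ` {1..n})) = Max ((\<lambda>j. Ij q \<phi> \<mu> j (\<lambda>x. max (f x) (g x))) ` {1..n})) sequentially"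
      using ev
    proof eventually_elim
      case (elim n)
      have "(\<lambda>j. Ij q \<phi> \<mu> j (\<lambda>x. max (f x) (g x))) ` {1..n} = (\<lambda>j. max (Ij q \<phi> \<mu> j f) (Ij q \<phi> \<mu> j g)) ` {1..n}"
        using eq by auto
      then show ?case using Max_max[OF _ elim] by simp
    qed
    have T: "(\<lambda>n. max (Max ((\<lambda>j. Ij q \<phi> \<mu> j f) ` {1..n})) (Max ((\<lambda>j. Ij q \<phi> \<mu> j g) ` {1..n}))) \<longlonglongrightarrow> max (Lambda q \<phi> \<mu> f) (Lambda q \<phi> \<mu> g)"
      using lamT[OF fc] lamT[OF gc] by (intro tendsto_intros)
    have "(\<lambda>n. Max ((\<lambda>j. Ij q \<phi> \<mu> j (\<lambda>x. max (f x) (g x))) ` {1..n})) \<longlonglongrightarrow> max (Lambda q \<phi> \<mu> f) (Lambda q \<phi> \<mu> g)"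
      by (rule Lim_transform_eventually[OF T E])
    then show ?thesis using lamT[OF fgc] LIMSEQ_unique by blast
  qed
  have L3: "Lambda q \<phi> \<mu> (\<lambda>x. 0) = 0"
  proof -
    have "Ij q \<phi> \<mu> j (\<lambda>x. 0) = q j" for j
      using mu_const[of 0] unfolding Ij_def by (simp add: comp_def)
    then show ?thesis using lam[of "\<lambda>x. 0"] assms(6) by simp
  qed
  have "idem_prob (Lambda q \<phi> \<mu>)"
    unfolding idem_prob_def maxplus_linear_def
    using L1 L2 L3 by (intro conjI allI impI) auto
  moreover have "\<forall>f. continuous_on UNIV f \<longrightarrow> ((\<lambda>n. Max ((\<lambda>j. Ij q \<phi> \<mu> j f) ` {1..n}))
               \<longlonglongrightarrow> (SUP j\<in>{1..}. Ij q \<phi> \<mu> j f))"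
    using conv by blast
  moreover have "\<forall>f. continuous_on UNIV f \<longrightarrow> Lambda q \<phi> \<mu> f = (SUP j\<in>{1..}. Ij q \<phi> \<mu> j f)"
    using lam by blast
  ultimately show ?thesis by blast
qed

end
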